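(* Let $\mathcal X$ be finite with $N=|\mathcal X|\ge2$, $c\in(0,1/N]$ and $0\le\varepsilon\le-\log c$. Then $$\Gamma_{\max}(\varepsilon,c)\le(1-Nc)e^\varepsilon+1\quad\text{and}\quad\Gamma_{\min}(\varepsilon,c)\ge\big((1-Nc)e^\varepsilon+1\big)^{-1}.$$
   Context: A kernel $K$ is a row-stochastic matrix with entries $K_{Y|X=x}(y)$, $(K\circ P_X)(y)=\sum_xK_{Y|X=x}(y)P_X(x)$. PML: $\ell_{K\times P_X}(X\to y)=\log\frac{\max_x K_{Y|X=x}(y)}{(K\circ P_X)(y)}$ for full-support $P_X$ and $(K\circ P_X)(y)>0$. $\mathcal Q_{\mathcal X}(c)=\{P_X:\min_xP_X(x)\ge c\}$; $C(K,\mathcal P)=\sup_{P_X\in\mathcal P}\sup_{y:(K\circ P_X)(y)>0}\ell_{K\times P_X}(X\to y)$; $\mathcal M(\varepsilon,c)$ is the set of kernels from $\mathcal X$ to a finite output set with $C(K,\mathcal Q_{\mathcal X}(c))\le\varepsilon$. Define $\Gamma_{\max}(\varepsilon,c)=\sup_{P_X,Q_X\in\mathcal Q_{\mathcal X}(c)}\sup_{K\in\mathcal M(\varepsilon,c)}\sup_{y}\frac{(K\circ P_X)(y)}{(K\circ Q_X)(y)}$ and $\Gamma_{\min}(\varepsilon,c)=\inf_{P_X,Q_X\in\mathcal Q_{\mathcal X}(c)}\inf_{K\in\mathcal M(\varepsilon,c)}\inf_{y}\frac{(K\circ P_X)(y)}{(K\circ Q_X)(y)}$, where $y$ ranges over outputs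 with $K_{Y|X=x}(y)>0$ for some $x$. *)

theory Defs
  imports "HOL-Analysis.Analysis"
begin

text \<open>Input alphabet: a finite type 'x. Output alphabet: a finite type 'y.
  A kernel is K :: 'x => 'y => real with K x y = K_{Y|X=x}(y).\<close>

definition is_kernel :: "('x::finite \<Rightarrow> 'y::finite \<Rightarrow> real) \<Rightarrow> bool" where
  "is_kernel K \<longleftrightarrow> (\<forall>x y. 0 \<le> K x y) \<and> (\<forall>x. (\<Sum>y\<in>UNIV. K x y) = 1)"

definition is_distribution :: "('x::finite \<Rightarrow> real) \<Rightarrow> bool" where
  "is_distribution P \<longleftrightarrow> (\<forall>x. 0 \<le> P x) \<and> (\<Sum>x\<in>UNIV. P x) = 1"

definition push :: "('x::finite \<Rightarrow> 'y \<Rightarrow> real) \<Rightarrow> ('x \<Rightarrow> real) \<Rightarrow> 'y \<Rightarrow> real" where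
  "push K P y = (\<Sum>x\<in>UNIV. K x y * P x)"

definition PML :: "('x::finite \<Rightarrow> 'y \<Rightarrow> real) \<Rightarrow> ('x \<Rightarrow> real) \<Rightarrow> 'y \<Rightarrow> real" where
  "PML K P y = ln (Max (range (\<lambda>x. K x y)) / push K P y)"

definition Qset :: "real \<Rightarrow> ('x::finite \<Rightarrow> real) set" where
  "Qset c = {P. is_distribution P \<and> (\<forall>x. c \<le> P x)}"

definition Cap :: "('x::finite \<Rightarrow> 'y::finite \<Rightarrow> real) \<Rightarrow> ('x \<Rightarrow> real) set \<Rightarrow> ereal" where
  "Cap K Ps = (SUP P\<in>Ps. SUP y\<in>{y. push K P y > 0}. ereal (PML K P y))"

definition Mset :: "real \<Rightarrow> real \<Rightarrow> ('x::finite \<Rightarrow> 'y::finite \<Rightarrow> real) set" where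
  "Mset eps c = {K. is_kernel K \<and> Cap K (Qset c) \<le> ereal eps}"

text \<open>Gamma_max / Gamma_min for kernels with output alphabet the type 'y
  (the paper's supremum over all finite output sets is recovered by
  quantifying the theorem over all finite types 'y).\<close>
definition Gamma_max :: "'x::finite itself \<Rightarrow> 'y::finite itself \<Rightarrow> real \<Rightarrow> real \<Rightarrow> ereal" where
  "Gamma_max _ _ eps c =
     (SUP (P, Q, K, y) \<in> {(P, Q, K, y). P \<in> (Qset c :: ('x \<Rightarrow> real) set) \<and> Q \<in> Qset c
          \<and> K \<in> (Mset eps c :: ('x \<Rightarrow> 'y \<Rightarrow> real) set) \<and> (\<exists>x. K x y > 0)}.
        ereal (push K P y / push K Q y))"

definition Gamma_min :: "'x::finite itself \<Rightarrow> 'y::finite itself \<Rightarrow> real \<Rightarrow> real \<Rightarrow> ereal" where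
  "Gamma_min _ _ eps c =
     (INF (P, Q, K, y) \<in> {(P, Q, K, y). P \<in> (Qset c :: ('x \<Rightarrow> real) set) \<and> Q \<in> Qset c
          \<and> K \<in> (Mset eps c :: ('x \<Rightarrow> 'y \<Rightarrow> real) set) \<and> (\<exists>x. K x y > 0)}.
        ereal (push K P y / push K Q y))"

end

theory Submission
  imports Defs
begin

lemma key:
  fixes K :: "'x::finite \<Rightarrow> 'y::finite \<Rightarrow> real"
  assumes c0: "0 < c" and cN: "c \<le> 1 / real CARD('x)"
    and P: "P \<in> Qset c" and Q: "Q \<in> Qset c" and K: "K \<in> Mset eps c"
    and ex: "\<exists>x. K x y > 0"
  shows "push K Q y > 0 \<and> push K P y / push K Q y \<le> (1 - real CARD('x) * c) * exp eps + 1"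
proof -
  define N where "N = real CARD('x)"
  have Npos: "N > 0" unfolding N_def by simp
  have Nc: "N * c \<le> 1" using cN Npos unfolding N_def by (simp add: field_simps)
  have Kn: "\<And>x y. 0 \<le> K x y" using K unfolding Mset_def is_kernel_def by auto
  obtain x1 where x1: "K x1 y > 0" using ex by auto
  define m where "m = Max (range (\<lambda>x. K x y))"
  have mge: "\<And>x. K x y \<le> m" unfolding m_def by (rule Max_ge) auto
  have "Min (range (\<lambda>x. K x y)) \<in> range (\<lambda>x. K x y)" by (rule Min_in) auto
  then obtain x0 where x0eq: "K x0 y = Min (range (\<lambda>x. K x y))" by (metis rangeE)
  have x0: "\<And>x. K x0 y \<le> K x y" unfolding x0eq by (rule Min_le) auto
  define S where "S = (\<Sum>x\<in>UNIV. K x y)"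
  have S1: "K x1 y \<le> S" unfolding S_def by (rule member_le_sum) (auto simp: Kn)
  define P0 where "P0 = (\<lambda>x. c + (if x = x0 then 1 - N * c else 0))"
  have sumc: "(\<Sum>x\<in>(UNIV::'x set). c) = N * c" unfolding N_def by simp
  have P0Q: "P0 \<in> Qset c"
    unfolding Qset_def is_distribution_def P0_def
    using c0 Nc by (auto simp: sum.distrib sumc N_def)
  have decomp: "\<And>R. is_distribution R \<Longrightarrow> push K R y = c * S + (\<Sum>x\<in>UNIV. K x y * (R x - c))"
  proof -
    fix R :: "'x \<Rightarrow> real" assume "is_distribution R"
    have "push K R y = (\<Sum>x\<in>UNIV. K x y * c + K x y * (R x - c))"
      unfolding push_def by (rule sum.cong) (auto simp: algebra_simps)
    also have "\<dots> = c * S + (\<Sum>x\<in>UNIV. K x y * (R x - c))"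
      by (simp add: sum.distrib S_def sum_distrib_left sum_distrib_right mult.commute)
    finally show "push K R y = c * S + (\<Sum>x\<in>UNIV. K x y * (R x - c))" .
  qed
  have sumdiff: "\<And>R :: 'x \<Rightarrow> real. is_distribution R \<Longrightarrow> (\<Sum>x\<in>UNIV. R x - c) = 1 - N * c"
    by (simp add: sum_subtractf sumc is_distribution_def N_def)
  have lowR: "\<And>R. R \<in> Qset c \<Longrightarrow> push K R y \<ge> c * S + (1 - N * c) * K x0 y"
  proof -
    fix R :: "'x \<Rightarrow> real" assume R: "R \<in> Qset c"
    then have d: "is_distribution R" and g: "\<And>x. c \<le> R x" unfolding Qset_def by auto
    have "(\<Sum>x\<in>UNIV. K x y * (R x - c)) \<ge> (\<Sum>x\<in>UNIV. K x0 y * (R x - c))"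
      by (rule sum_mono) (use g x0 in \<open>auto intro: mult_right_mono\<close>)
    also have "(\<Sum>x\<in>UNIV. K x0 y * (R x - c)) = K x0 y * (1 - N * c)"
      by (simp add: sum_distrib_left[symmetric] sumdiff d)
    finally show "push K R y \<ge> c * S + (1 - N * c) * K x0 y" using decomp[OF d] by (simp add: mult.commute)
  qed
  have upR: "\<And>R. R \<in> Qset c \<Longrightarrow> push K R y \<le> c * S + (1 - N * c) * m"
  proof -
    fix R :: "'x \<Rightarrow> real" assume R: "R \<in> Qset c"
    then have d: "is_distribution R" and g: "\<And>x. c \<le> R x" unfolding Qset_def by auto
    have "(\<Sum>x\<in>UNIV. K x y * (R x - c)) \<le> (\<Sum>x\<in>UNIV. m * (R x - c))"
      by (rule sum_mono) (use g mge in \<open>auto intro: mult_right_mono\<close>)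
    also have "(\<Sum>x\<in>UNIV. m * (R x - c)) = m * (1 - N * c)"
      by (simp add: sum_distrib_left[symmetric] sumdiff d)
    finally show "push K R y \<le> c * S + (1 - N * c) * m" using decomp[OF d] by (simp add: mult.commute)
  qed
  define p0 where "p0 = c * S + (1 - N * c) * K x0 y"
  have p0pos: "p0 > 0" unfolding p0_def using c0 S1 x1 Nc Kn[of x0 y]
    by (smt (verit) mult_nonneg_nonneg mult_pos_pos)
  have pushP0: "push K P0 y = p0"
  proof -
    have "push K P0 y = (\<Sum>x\<in>UNIV. K x y * c + (if x = x0 then K x y * (1 - N * c) else 0))"
      unfolding push_def P0_def by (rule sum.cong) (auto simp: algebra_simps)
    also have "\<dots> = p0" by (simp add: sum.distrib S_def sum_distrib_left sum_distrib_right p0_def mult.commute)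
    finally show ?thesis .
  qed
  have mpos: "m > 0" using mge[of x1] x1 by simp
  have "ereal (PML K P0 y) \<le> Cap K (Qset c)"
    unfolding Cap_def
    by (rule SUP_upper2[OF P0Q], rule SUP_upper) (use pushP0 p0pos in auto)
  also have "\<dots> \<le> ereal eps" using K unfolding Mset_def by auto
  finally have "PML K P0 y \<le> eps" by simp
  then have "ln (m / p0) \<le> eps" unfolding PML_def m_def[symmetric] pushP0 .
  then have "m / p0 \<le> exp eps" using mpos p0pos
    by (metis divide_pos_pos exp_le_cancel_iff exp_ln)
  then have mb: "m \<le> exp eps * p0" using p0pos by (simp add: field_simps)
  have Qge: "push K Q y \<ge> p0" using lowR[OF Q] p0_def by simp
  have nn: "0 \<le> (1 - N * c) * K x0 y" using Kn[of x0 y] Nc by simp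
  have Ple: "push K P y \<le> p0 + (1 - N * c) * m" using upR[OF P] p0_def nn
    by linarith
  have Pnn: "push K P y \<ge> 0" using lowR[OF P] Kn[of x0 y] c0 S1 x1 Nc
    by (smt (verit) mult_nonneg_nonneg)
  have "push K P y / push K Q y \<le> (p0 + (1 - N * c) * m) / p0"
    using Ple Qge p0pos Pnn by (smt (verit) divide_mono)
  also have "\<dots> = 1 + (1 - N * c) * (m / p0)" using p0pos by (simp add: field_simps)
  also have "\<dots> \<le> 1 + (1 - N * c) * exp eps"
    using \<open>m / p0 \<le> exp eps\<close> Nc by (metis add_left_mono diff_ge_0_iff_ge mult_left_mono)
  finally show ?thesis using Qge p0pos unfolding N_def by simp
qed

theorem proposition2:
  fixes eps c :: real
  assumes "CARD('x::finite) \<ge> 2"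
    and "0 < c" and "c \<le> 1 / real CARD('x)"
    and "0 \<le> eps" and "eps \<le> - ln c"
  shows "Gamma_max TYPE('x) TYPE('y::finite) eps c
           \<le> ereal ((1 - real CARD('x) * c) * exp eps + 1)
       \<and> Gamma_min TYPE('x) TYPE('y) eps c
           \<ge> ereal (1 / ((1 - real CARD('x) * c) * exp eps + 1))"
proof
  show "Gamma_max TYPE('x) TYPE('y::finite) eps c
           \<le> ereal ((1 - real CARD('x) * c) * exp eps + 1)"
    unfolding Gamma_max_def
  proof (rule SUP_least, clarsimp)
    fix P Q :: "'x \<Rightarrow> real" and K :: "'x \<Rightarrow> 'y \<Rightarrow> real" and y x
    assume "P \<in> Qset c" "Q \<in> Qset c" "K \<in> Mset eps c" "0 < K x y"
    then show "push K P y / push K Q y \<le> (1 - real CARD('x) * c) * exp eps + 1"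
      using key[OF assms(2,3)] by blast
  qed
  show "Gamma_min TYPE('x) TYPE('y) eps c
           \<ge> ereal (1 / ((1 - real CARD('x) * c) * exp eps + 1))"
    unfolding Gamma_min_def
  proof (rule INF_greatest, clarsimp)
    fix P Q :: "'x \<Rightarrow> real" and K :: "'x \<Rightarrow> 'y \<Rightarrow> real" and y x
    assume h: "P \<in> Qset c" "Q \<in> Qset c" "K \<in> Mset eps c" "0 < K x y"
    then have a: "push K P y > 0 \<and> push K Q y / push K P y \<le> (1 - real CARD('x) * c) * exp eps + 1"
      using key[OF assms(2,3)] by blast
    have b: "push K Q y > 0" using h key[OF assms(2,3)] by blast
    have "1 / ((1 - real CARD('x) * c) * exp eps + 1) \<le> 1 / (push K Q y / push K P y)"
    proof (rule divide_left_mono)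
      show "push K Q y / push K P y \<le> (1 - real CARD('x) * c) * exp eps + 1" using a by blast
      have "0 < push K Q y / push K P y" using a b by simp
      then show "0 < ((1 - real CARD('x) * c) * exp eps + 1) * (push K Q y / push K P y)"
        using a by (smt (verit) mult_pos_pos)
    qed simp
    then show "1 / ((1 - real CARD('x) * c) * exp eps + 1) \<le> push K P y / push K Q y"
      by simp
  qed
qed

end
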